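(* Let $\overrightarrow{W}$ be a Morse sequence on a simplicial complex $K$, with reference map $\curlywedge$ and coreference map $\curlyvee$. (1) If $z,z'\in Z_p(K)$ and $\curlywedge(z)=\curlywedge(z')$, then $z+z'\in B_p(K)$, i.e. $z$ and $z'$ are homologous. (2) If $z,z'\in Z^p(K)$ and $\curlyvee(z)=\curlyvee(z')$, then $z+z'\in B^p(K)$, i.e. $z$ and $z'$ are cohomologous.
   Context: A simplicial complex $K$ is a finite collection of non-empty finite sets closed under taking non-empty subsets; $\dim\sigma=|\sigma|-1$, $K^{(p)}$ the set of $p$-simplices. A pair $(\sigma,\tau)$ with $\sigma\subsetneq\tau$ is a free pair for $K$ if $\tau$ is the only simplex other than $\sigma$ containing $\sigma$; $K$ is then an elementary expansion of $K\setminus\{\sigma,\tau\}$. If $\nu$ is a facet (maximal simplex) of $K$, $K$ is an elementary filling of $K\setminus\{\nu\}$. A Morse sequence on $K$ is a sequence $\langle\emptyset=K_0,\dots,K_k=K\rangle$ with each $K_i$ an elementary expansion or filling of $K_{i-1}$; simplices added by fillings are critical; for an expansion $K_i=K_{i-1}\cup\{\sigma,\tau\}$, $\sigma\subset\tau$, $\sigma$ is lower regular and $\tau$ upper regular. $K[p]$ is the $\mathbb{Z}_2$-vector space of subsets of $K^{(p)}$ (sum = symmetric difference, $0=\emptyset$). For $\sigma\in K^{(p)}$, $\partial(\sigma)=\{\tau\in K^{(p-1)}:\tau\subset\sigma\}$, $\delta(\sigma)=\{\tau\in K^{(p+1)}:\sigma\subset\tau\}$, extended linearly to $\partial_p:K[p]\to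 K[p-1]$, $\delta_p:K[p]\to K[p+1]$; $Z_p(K)=\ker\partial_p$, $B_p(K)=\operatorname{im}\partial_{p+1}$, $Z^p(K)=\ker\delta_p$, $B^p(K)=\operatorname{im}\delta_{p-1}$. The reference map $\curlywedge$ is the unique map assigning to each $p$-simplex a set of critical $p$-simplices, extended linearly (mod 2), with $\curlywedge(\nu)=\{\nu\}$ for critical $\nu$ and $\curlywedge(\tau)=0=\curlywedge(\partial(\tau))$ for upper regular $\tau$; the coreference map $\curlyvee$ is the unique such map with $\curlyvee(\nu)=\{\nu\}$ for critical $\nu$ and $\curlyvee(\sigma)=0=\curlyvee(\delta(\sigma))$ for lower regular $\sigma$. *)

theory Defs
  imports Main
begin

definition simplicial_complex :: "'a set set \<Rightarrow> bool" where
  "simplicial_complex K \<longleftrightarrow> finite K \<and>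
     (\<forall>\<sigma>\<in>K. finite \<sigma> \<and> \<sigma> \<noteq> {} \<and> (\<forall>\<tau>. \<tau> \<subseteq> \<sigma> \<and> \<tau> \<noteq> {} \<longrightarrow> \<tau> \<in> K))"

definition simplices :: "'a set set \<Rightarrow> nat \<Rightarrow> 'a set set" where
  "simplices K p = {\<sigma>\<in>K. card \<sigma> = p + 1}"

definition free_pair :: "'a set set \<Rightarrow> 'a set \<Rightarrow> 'a set \<Rightarrow> bool" where
  "free_pair K \<sigma> \<tau> \<longleftrightarrow> \<sigma> \<subset> \<tau> \<and> \<sigma> \<in> K \<and> \<tau> \<in> K \<and>
     (\<forall>\<nu>\<in>K. \<sigma> \<subseteq> \<nu> \<and> \<nu> \<noteq> \<sigma> \<longrightarrow> \<nu> = \<tau>)"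

definition facet :: "'a set set \<Rightarrow> 'a set \<Rightarrow> bool" where
  "facet K \<nu> \<longleftrightarrow> \<nu> \<in> K \<and> (\<forall>\<mu>\<in>K. \<nu> \<subseteq> \<mu> \<longrightarrow> \<mu> = \<nu>)"

definition elem_expansion :: "'a set set \<Rightarrow> 'a set set \<Rightarrow> bool" where
  "elem_expansion K' L \<longleftrightarrow> (\<exists>\<sigma> \<tau>. free_pair K' \<sigma> \<tau> \<and> L = K' - {\<sigma>, \<tau>})"

definition elem_filling :: "'a set set \<Rightarrow> 'a set set \<Rightarrow> bool" where
  "elem_filling K' L \<longleftrightarrow> (\<exists>\<nu>. facet K' \<nu> \<and> L = K' - {\<nu>})"

definition morse_seq :: "'a set set \<Rightarrow> 'a set set list \<Rightarrow> bool" where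
  "morse_seq K W \<longleftrightarrow> W \<noteq> [] \<and> W ! 0 = {} \<and> last W = K \<and>
     (\<forall>i. 0 < i \<and> i < length W \<longrightarrow>
        elem_expansion (W ! i) (W ! (i - 1)) \<or> elem_filling (W ! i) (W ! (i - 1)))"

definition critical :: "'a set set list \<Rightarrow> 'a set \<Rightarrow> bool" where
  "critical W \<nu> \<longleftrightarrow> (\<exists>i. 0 < i \<and> i < length W \<and> facet (W ! i) \<nu> \<and> W ! (i - 1) = W ! i - {\<nu>})"

definition lower_regular :: "'a set set list \<Rightarrow> 'a set \<Rightarrow> bool" where
  "lower_regular W \<sigma> \<longleftrightarrow> (\<exists>i \<tau>. 0 < i \<and> i < length W \<and> free_pair (W ! i) \<sigma> \<tau> \<and>
        W ! (i - 1) = W ! i - {\<sigma>, \<tau>})"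

definition upper_regular :: "'a set set list \<Rightarrow> 'a set \<Rightarrow> bool" where
  "upper_regular W \<tau> \<longleftrightarrow> (\<exists>i \<sigma>. 0 < i \<and> i < length W \<and> free_pair (W ! i) \<sigma> \<tau> \<and>
        W ! (i - 1) = W ! i - {\<sigma>, \<tau>})"

section \<open>Chains over Z_2 (a p-chain is a subset of the p-simplices)\<close>

text \<open>Boundary of a p-chain c (a (p-1)-chain; empty for p = 0).\<close>
definition bd :: "'a set set \<Rightarrow> nat \<Rightarrow> 'a set set \<Rightarrow> 'a set set" where
  "bd K p c = {\<tau>\<in>K. card \<tau> = p \<and> odd (card {\<sigma>\<in>c. \<tau> \<subset> \<sigma>})}"

definition cobd :: "'a set set \<Rightarrow> nat \<Rightarrow> 'a set set \<Rightarrow> 'a set set" where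
  "cobd K p c = {\<tau>\<in>K. card \<tau> = p + 2 \<and> odd (card {\<sigma>\<in>c. \<sigma> \<subset> \<tau>})}"

definition cycles :: "'a set set \<Rightarrow> nat \<Rightarrow> 'a set set set" where
  "cycles K p = {z. z \<subseteq> simplices K p \<and> bd K p z = {}}"

definition boundaries :: "'a set set \<Rightarrow> nat \<Rightarrow> 'a set set set" where
  "boundaries K p = {bd K (p + 1) c | c. c \<subseteq> simplices K (p + 1)}"

definition cocycles :: "'a set set \<Rightarrow> nat \<Rightarrow> 'a set set set" where
  "cocycles K p = {z. z \<subseteq> simplices K p \<and> cobd K p z = {}}"

text \<open>B^0 = image of delta_(-1) : K[-1] = 0 \<rightarrow> K[0], i.e. the zero space.\<close>
definition coboundaries :: "'a set set \<Rightarrow> nat \<Rightarrow> 'a set set set" where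
  "coboundaries K p = (if p = 0 then {{}}
      else {cobd K (p - 1) c | c. c \<subseteq> simplices K (p - 1)})"

text \<open>Linear (mod 2) extension of a map on simplices to chains.\<close>
definition lin_ext :: "('a set \<Rightarrow> 'a set set) \<Rightarrow> 'a set set \<Rightarrow> 'a set set" where
  "lin_ext f c = {\<nu>. odd (card {\<sigma>\<in>c. \<nu> \<in> f \<sigma>})}"

definition chain_add :: "'b set \<Rightarrow> 'b set \<Rightarrow> 'b set" where
  "chain_add A B = (A - B) \<union> (B - A)"

definition is_reference_map :: "'a set set \<Rightarrow> 'a set set list \<Rightarrow> ('a set \<Rightarrow> 'a set set) \<Rightarrow> bool" where
  "is_reference_map K W f \<longleftrightarrow>
     (\<forall>p. \<forall>\<sigma>\<in>simplices K p. f \<sigma> \<subseteq> {\<nu>\<in>simplices K p. critical W \<nu>}) \<and>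
     (\<forall>\<nu>\<in>K. critical W \<nu> \<longrightarrow> f \<nu> = {\<nu>}) \<and>
     (\<forall>\<tau>\<in>K. upper_regular W \<tau> \<longrightarrow>
        f \<tau> = {} \<and> lin_ext f (bd K (card \<tau> - 1) {\<tau>}) = {})"

definition is_coreference_map :: "'a set set \<Rightarrow> 'a set set list \<Rightarrow> ('a set \<Rightarrow> 'a set set) \<Rightarrow> bool" where
  "is_coreference_map K W f \<longleftrightarrow>
     (\<forall>p. \<forall>\<sigma>\<in>simplices K p. f \<sigma> \<subseteq> {\<nu>\<in>simplices K p. critical W \<nu>}) \<and>
     (\<forall>\<nu>\<in>K. critical W \<nu> \<longrightarrow> f \<nu> = {\<nu>}) \<and>
     (\<forall>\<sigma>\<in>K. lower_regular W \<sigma> \<longrightarrow>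
        f \<sigma> = {} \<and> lin_ext f (cobd K (card \<sigma> - 1) {\<sigma>}) = {})"

end

theory Submission
  imports Defs
begin

lemma mem_chain_add: "x \<in> chain_add A B \<longleftrightarrow> (x \<in> A) \<noteq> (x \<in> B)"
  unfolding chain_add_def by blast

lemma chain_add_empty[simp]: "chain_add {} A = A" "chain_add A {} = A"
  unfolding chain_add_def by auto

lemma chain_add_cancel: "chain_add (chain_add A B) B = A"
  unfolding chain_add_def by auto

lemma finite_chain_add: "finite A \<Longrightarrow> finite B \<Longrightarrow> finite (chain_add A B)"
  unfolding chain_add_def by auto

lemma card_chain_add:
  assumes "finite A" "finite B"
  shows "card (chain_add A B) + 2 * card (A \<inter> B) = card A + card B"
proof -
  have d: "(A - B) \<inter> (B - A) = {}" by blast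
  have 1: "card (chain_add A B) = card (A - B) + card (B - A)"
    unfolding chain_add_def using assms d by (simp add: card_Un_disjoint)
  have 2: "card A = card (A - B) + card (A \<inter> B)"
    using assms card_Int_Diff[of A B] by simp
  have 3: "card B = card (B - A) + card (A \<inter> B)"
    using assms card_Int_Diff[of B A] by (simp add: Int_commute)
  show ?thesis using 1 2 3 by simp
qed

lemma odd_card_chain_add:
  assumes "finite A" "finite B"
  shows "odd (card {x \<in> chain_add A B. P x}) \<longleftrightarrow> (odd (card {x\<in>A. P x}) \<noteq> odd (card {x\<in>B. P x}))"
proof -
  have e: "{x \<in> chain_add A B. P x} = chain_add {x\<in>A. P x} {x\<in>B. P x}"
    unfolding chain_add_def by blast
  have "card (chain_add {x\<in>A. P x} {x\<in>B. P x}) + 2 * card ({x\<in>A. P x} \<inter> {x\<in>B. P x})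
        = card {x\<in>A. P x} + card {x\<in>B. P x}"
    using assms by (intro card_chain_add) auto
  moreover have "\<And>a c b d::nat. a + 2*c = b + d \<Longrightarrow> odd a \<longleftrightarrow> (odd b \<noteq> odd d)" by presburger
  ultimately show ?thesis unfolding e by blast
qed

lemma bd_add:
  assumes "finite A" "finite B"
  shows "bd K p (chain_add A B) = chain_add (bd K p A) (bd K p B)"
proof (rule set_eqI)
  fix t
  have "t \<in> chain_add (bd K p A) (bd K p B) \<longleftrightarrow> (t \<in> bd K p A) \<noteq> (t \<in> bd K p B)"
    by (rule mem_chain_add)
  then show "t \<in> bd K p (chain_add A B) \<longleftrightarrow> t \<in> chain_add (bd K p A) (bd K p B)"
    using odd_card_chain_add[OF assms, of "\<lambda>s. t \<subset> s"]
    unfolding bd_def mem_Collect_eq by meson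
qed

lemma cobd_add:
  assumes "finite A" "finite B"
  shows "cobd K p (chain_add A B) = chain_add (cobd K p A) (cobd K p B)"
proof (rule set_eqI)
  fix t
  have "t \<in> chain_add (cobd K p A) (cobd K p B) \<longleftrightarrow> (t \<in> cobd K p A) \<noteq> (t \<in> cobd K p B)"
    by (rule mem_chain_add)
  then show "t \<in> cobd K p (chain_add A B) \<longleftrightarrow> t \<in> chain_add (cobd K p A) (cobd K p B)"
    using odd_card_chain_add[OF assms, of "\<lambda>s. s \<subset> t"]
    unfolding cobd_def mem_Collect_eq by meson
qed

lemma lin_ext_add:
  assumes "finite A" "finite B"
  shows "lin_ext f (chain_add A B) = chain_add (lin_ext f A) (lin_ext f B)"
proof (rule set_eqI)
  fix t
  have "t \<in> chain_add (lin_ext f A) (lin_ext f B) \<longleftrightarrow> (t \<in> lin_ext f A) \<noteq> (t \<in> lin_ext f B)"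
    by (rule mem_chain_add)
  then show "t \<in> lin_ext f (chain_add A B) \<longleftrightarrow> t \<in> chain_add (lin_ext f A) (lin_ext f B)"
    using odd_card_chain_add[OF assms, of "\<lambda>s. t \<in> f s"]
    unfolding lin_ext_def mem_Collect_eq by meson
qed

lemma bd_empty[simp]: "bd K p {} = {}" unfolding bd_def by simp
lemma cobd_empty[simp]: "cobd K p {} = {}" unfolding cobd_def by simp

lemma two_between:
  assumes "finite T" "S \<subseteq> T" "card T = card S + 2"
  shows "card {R. S \<subset> R \<and> R \<subset> T} = 2"
proof -
  have fS: "finite S" using assms finite_subset by blast
  have "card (T - S) = 2" using assms fS by (simp add: card_Diff_subset)
  then obtain x y where xy: "T - S = {x, y}" "x \<noteq> y" by (auto simp: card_2_iff)
  have xT: "x \<in> T" "x \<notin> S" "y \<in> T" "y \<notin> S" using xy(1) by (metis Diff_iff insertI1 insert_commute)+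
  have TS: "T = S \<union> (T - S)" using assms(2) by blast
  have "{R. S \<subset> R \<and> R \<subset> T} = {insert x S, insert y S}"
  proof (rule set_eqI, rule iffI)
    fix R assume "R \<in> {R. S \<subset> R \<and> R \<subset> T}"
    then have R: "S \<subset> R" "R \<subset> T" by auto
    have RS: "R = S \<union> (R - S)" using R by blast
    have a: "R - S \<subseteq> {x, y}" using R xy(1) by blast
    have b: "R - S \<noteq> {}" using R by blast
    have c: "R - S \<noteq> {x, y}"
    proof
      assume "R - S = {x, y}"
      then have "R = T" using RS TS xy(1) by simp
      then show False using R by simp
    qed
    have "R - S = {x} \<or> R - S = {y}" using a b c by blast
    then have "R = insert x S \<or> R = insert y S" using RS by auto
    then show "R \<in> {insert x S, insert y S}" by simp
  next
    fix R assume "R \<in> {insert x S, insert y S}"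
    then have "R = insert x S \<or> R = insert y S" by simp
    then show "R \<in> {R. S \<subset> R \<and> R \<subset> T}"
    proof
      assume "R = insert x S"
      moreover have "y \<notin> insert x S" using xy xT by simp
      ultimately show ?thesis using xT assms(2) by blast
    next
      assume "R = insert y S"
      moreover have "x \<notin> insert y S" using xy xT by simp
      ultimately show ?thesis using xT assms(2) by blast
    qed
  qed
  moreover have "insert x S \<noteq> insert y S" using xy xT by blast
  ultimately show ?thesis using xy(2) by simp
qed

lemma ref_crit: "is_reference_map K W f \<Longrightarrow> v \<in> K \<Longrightarrow> critical W v \<Longrightarrow> f v = {v}"
  unfolding is_reference_map_def by blast
lemma ref_up: "is_reference_map K W f \<Longrightarrow> t \<in> K \<Longrightarrow> upper_regular W t \<Longrightarrow>
    f t = {} \<and> lin_ext f (bd K (card t - 1) {t}) = {}"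
  unfolding is_reference_map_def by blast
lemma coref_crit: "is_coreference_map K W f \<Longrightarrow> v \<in> K \<Longrightarrow> critical W v \<Longrightarrow> f v = {v}"
  unfolding is_coreference_map_def by blast
lemma coref_low: "is_coreference_map K W f \<Longrightarrow> t \<in> K \<Longrightarrow> lower_regular W t \<Longrightarrow>
    f t = {} \<and> lin_ext f (cobd K (card t - 1) {t}) = {}"
  unfolding is_coreference_map_def by blast

locale mseq =
  fixes K :: "'a set set" and W :: "'a set set list"
  assumes cx: "simplicial_complex K" and ms: "morse_seq K W"
begin

lemma finK: "finite K" using cx unfolding simplicial_complex_def by blast

lemma K_fin: "s \<in> K \<Longrightarrow> finite s" using cx unfolding simplicial_complex_def by blast

lemma K_ne: "s \<in> K \<Longrightarrow> s \<noteq> {}" using cx unfolding simplicial_complex_def by blast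

lemma K_closed: "s \<in> K \<Longrightarrow> t \<subseteq> s \<Longrightarrow> t \<noteq> {} \<Longrightarrow> t \<in> K"
  using cx unfolding simplicial_complex_def by blast

lemma fin_sub: "A \<subseteq> K \<Longrightarrow> finite A" using finK finite_subset by blast

lemma fin_simplices: "A \<subseteq> simplices K p \<Longrightarrow> finite A"
  using fin_sub unfolding simplices_def by blast

lemma W_ne: "W \<noteq> []" using ms unfolding morse_seq_def by blast

lemma W0: "W ! 0 = {}" using ms unfolding morse_seq_def by blast

lemma Wlast: "W ! (length W - 1) = K"
  using ms W_ne unfolding morse_seq_def by (simp add: last_conv_nth)

lemma step: "0 < i \<Longrightarrow> i < length W \<Longrightarrow>
   (\<exists>a b. free_pair (W!i) a b \<and> W!(i-1) = W!i - {a,b}) \<or> (\<exists>v. facet (W!i) v \<and> W!(i-1) = W!i - {v})"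
  using ms unfolding morse_seq_def elem_expansion_def elem_filling_def by blast

lemma step_sub: "0 < i \<Longrightarrow> i < length W \<Longrightarrow> W!(i-1) \<subseteq> W!i"
  using step by blast

lemma mono: "i \<le> j \<Longrightarrow> j < length W \<Longrightarrow> W!i \<subseteq> W!j"
proof (induction j)
  case 0 then show ?case by simp
next
  case (Suc j)
  show ?case
  proof (cases "i = Suc j")
    case True then show ?thesis by simp
  next
    case False
    then have "W!i \<subseteq> W!j" using Suc by auto
    also have "W!j \<subseteq> W!(Suc j)" using step_sub[of "Suc j"] Suc.prems by simp
    finally show ?thesis .
  qed
qed

lemma W_sub_K: "i < length W \<Longrightarrow> W!i \<subseteq> K"
  using mono[of i "length W - 1"] Wlast by simp

lemma rev_ind:
  assumes "P (length W - 1)" "\<And>i. 0 < i \<Longrightarrow> i < length W \<Longrightarrow> P i \<Longrightarrow> P (i - 1)" "i < length W"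
  shows "P i"
proof -
  have "\<forall>i. i < length W \<longrightarrow> length W - 1 - i = k \<longrightarrow> P i" for k
  proof (induction k)
    case 0
    show ?case
    proof (intro allI impI)
      fix i assume "i < length W" "length W - 1 - i = 0"
      then have "i = length W - 1" by simp
      then show "P i" using assms(1) by simp
    qed
  next
    case (Suc k)
    show ?case
    proof (intro allI impI)
      fix i assume i: "i < length W" "length W - 1 - i = Suc k"
      then have "Suc i < length W" "length W - 1 - Suc i = k" by auto
      then have "P (Suc i)" using Suc.IH by blast
      then show "P i" using assms(2)[of "Suc i"] \<open>Suc i < length W\<close> by simp
    qed
  qed
  then show ?thesis using assms(3) by blast
qed

lemma closed:
  assumes i: "i < length W"
  shows "\<forall>r\<in>W!i. \<forall>m. m \<subseteq> r \<and> m \<noteq> {} \<longrightarrow> m \<in> W!i"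
proof (rule rev_ind[where P = "\<lambda>i. \<forall>r\<in>W!i. \<forall>m. m \<subseteq> r \<and> m \<noteq> {} \<longrightarrow> m \<in> W!i", OF _ _ i])
  show "\<forall>r\<in>W!(length W - 1). \<forall>m. m \<subseteq> r \<and> m \<noteq> {} \<longrightarrow> m \<in> W!(length W - 1)"
    using Wlast K_closed by auto
next
  fix i assume i0: "0 < i" and il: "i < length W"
    and IH: "\<forall>r\<in>W!i. \<forall>m. m \<subseteq> r \<and> m \<noteq> {} \<longrightarrow> m \<in> W!i"
  have sub: "W!(i-1) \<subseteq> W!i" using step_sub[OF i0 il] .
  from step[OF i0 il] show "\<forall>r\<in>W!(i-1). \<forall>m. m \<subseteq> r \<and> m \<noteq> {} \<longrightarrow> m \<in> W!(i-1)"
  proof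
    assume "\<exists>a b. free_pair (W!i) a b \<and> W!(i-1) = W!i - {a,b}"
    then obtain a b where ab: "free_pair (W!i) a b" "W!(i-1) = W!i - {a,b}" by blast
    show ?thesis
    proof (intro ballI allI impI)
      fix r m assume r: "r \<in> W!(i-1)" and m: "m \<subseteq> r \<and> m \<noteq> {}"
      have rW: "r \<in> W!i" "r \<noteq> a" "r \<noteq> b" using r ab(2) by auto
      have "m \<in> W!i" using IH rW(1) m by blast
      moreover have "m \<noteq> a"
      proof
        assume "m = a"
        then have "a \<subseteq> r" using m by simp
        then have "r = b" using ab(1) rW unfolding free_pair_def by blast
        then show False using rW by simp
      qed
      moreover have "m \<noteq> b"
      proof
        assume "m = b"
        then have "a \<subseteq> r" using m ab(1) unfolding free_pair_def by blast
        then have "r = b" using ab(1) rW unfolding free_pair_def by blast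
        then show False using rW by simp
      qed
      ultimately show "m \<in> W!(i-1)" using ab(2) by blast
    qed
  next
    assume "\<exists>v. facet (W!i) v \<and> W!(i-1) = W!i - {v}"
    then obtain v where v: "facet (W!i) v" "W!(i-1) = W!i - {v}" by blast
    show ?thesis
    proof (intro ballI allI impI)
      fix r m assume r: "r \<in> W!(i-1)" and m: "m \<subseteq> r \<and> m \<noteq> {}"
      have rW: "r \<in> W!i" "r \<noteq> v" using r v(2) by auto
      have "m \<in> W!i" using IH rW(1) m by blast
      moreover have "m \<noteq> v"
      proof
        assume "m = v"
        then have "v \<subseteq> r" using m by simp
        then have "r = v" using v(1) rW unfolding facet_def by blast
        then show False using rW by simp
      qed
      ultimately show "m \<in> W!(i-1)" using v(2) by blast
    qed
  qed
qed

lemma closedW: "i < length W \<Longrightarrow> r \<in> W!i \<Longrightarrow> m \<subseteq> r \<Longrightarrow> m \<noteq> {} \<Longrightarrow> m \<in> W!i"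
  using closed by blast

lemma pair_card:
  assumes "i < length W" "free_pair (W!i) a b"
  shows "card b = Suc (card a)" "a \<in> K" "b \<in> K" "a \<subset> b"
proof -
  have ab: "a \<subset> b" "a \<in> W!i" "b \<in> W!i" using assms(2) unfolding free_pair_def by auto
  then show "a \<in> K" "b \<in> K" "a \<subset> b" using W_sub_K[OF assms(1)] by auto
  obtain x where x: "x \<in> b" "x \<notin> a" using ab by blast
  have sub: "insert x a \<subseteq> b" using x ab(1) by blast
  have "insert x a \<in> W!i" using closedW[OF assms(1) ab(3) sub] by blast
  moreover have "a \<subseteq> insert x a" "insert x a \<noteq> a" using x by auto
  ultimately have "insert x a = b" using assms(2) unfolding free_pair_def by metis
  moreover have "finite a" using K_fin \<open>a \<in> K\<close> by blast
  ultimately show "card b = Suc (card a)" using x by auto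
qed

lemma bd_single: "bd K q {t} = {r\<in>K. card r = q \<and> r \<subset> t}"
  unfolding bd_def by (auto simp: Collect_conv_if)

lemma cobd_single: "cobd K q {t} = {r\<in>K. card r = q + 2 \<and> t \<subset> r}"
  unfolding cobd_def by (auto simp: Collect_conv_if)

lemma bdbd:
  assumes "t \<in> K" "card t = p + 2"
  shows "bd K p (bd K (p+1) {t}) = {}"
proof -
  have ft: "finite t" using K_fin assms(1) .
  { fix m assume m: "m \<in> K" "card m = p"
    have "even (card {r \<in> bd K (p+1) {t}. m \<subset> r})"
    proof (cases "m \<subset> t")
      case False
      then have "{r \<in> bd K (p+1) {t}. m \<subset> r} = {}" by (auto simp: bd_single)
      then show ?thesis by (metis card.empty even_zero)
    next
      case True
      have "{r \<in> bd K (p+1) {t}. m \<subset> r} = {R. m \<subset> R \<and> R \<subset> t}"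
      proof (rule set_eqI, rule iffI)
        fix R assume "R \<in> {r \<in> bd K (p+1) {t}. m \<subset> r}"
        then show "R \<in> {R. m \<subset> R \<and> R \<subset> t}" by (simp add: bd_single)
      next
        fix R assume R: "R \<in> {R. m \<subset> R \<and> R \<subset> t}"
        have "R \<in> K" using K_closed[OF assms(1)] R by blast
        moreover have fR: "finite R" using R ft finite_subset by blast
        have "card m < card R" using R fR by (auto intro: psubset_card_mono)
        moreover have "card R < card t" using R ft by (auto intro: psubset_card_mono)
        ultimately show "R \<in> {r \<in> bd K (p+1) {t}. m \<subset> r}" using m assms R by (simp add: bd_single)
      qed
      moreover have "card {R. m \<subset> R \<and> R \<subset> t} = 2"
        using two_between[of t m] True ft assms m by simp
      ultimately show ?thesis by simp
    qed }
  then show ?thesis unfolding bd_def[of K p] by auto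
qed

lemma cobdcobd:
  assumes "s \<in> K" "card s = q + 1"
  shows "cobd K (q+1) (cobd K q {s}) = {}"
proof -
  { fix m assume m: "m \<in> K" "card m = q + 3"
    have fm: "finite m" using K_fin m(1) .
    have "even (card {r \<in> cobd K q {s}. r \<subset> m})"
    proof (cases "s \<subset> m")
      case False
      then have "{r \<in> cobd K q {s}. r \<subset> m} = {}" by (auto simp: cobd_single)
      then show ?thesis by (metis card.empty even_zero)
    next
      case True
      have "{r \<in> cobd K q {s}. r \<subset> m} = {R. s \<subset> R \<and> R \<subset> m}"
      proof (rule set_eqI, rule iffI)
        fix R assume "R \<in> {r \<in> cobd K q {s}. r \<subset> m}"
        then show "R \<in> {R. s \<subset> R \<and> R \<subset> m}" by (simp add: cobd_single)
      next
        fix R assume R: "R \<in> {R. s \<subset> R \<and> R \<subset> m}"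
        have "R \<in> K" using K_closed[OF m(1)] R by blast
        moreover have fR: "finite R" using R fm finite_subset by blast
        have "card s < card R" using R fR by (auto intro: psubset_card_mono)
        moreover have "card R < card m" using R fm by (auto intro: psubset_card_mono)
        ultimately show "R \<in> {r \<in> cobd K q {s}. r \<subset> m}" using m assms R by (simp add: cobd_single)
      qed
      moreover have "card {R. s \<subset> R \<and> R \<subset> m} = 2"
        using two_between[of m s] True fm assms m by simp
      ultimately show ?thesis by simp
    qed }
  then show ?thesis unfolding cobd_def[of K "q+1"] by auto
qed

lemma ref_sub:
  assumes rf: "is_reference_map K W f"
  shows "i < length W \<Longrightarrow> s \<in> W!i \<Longrightarrow> f s \<subseteq> W!i"
proof (induction i arbitrary: s)
  case 0 then show ?case using W0 by simp
next
  case (Suc i)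
  have ilt: "i < length W" using Suc.prems by simp
  have mono1: "W!i \<subseteq> W!(Suc i)" using step_sub[of "Suc i"] Suc.prems by simp
  show ?case
  proof (cases "s \<in> W!i")
    case True then show ?thesis using Suc.IH[OF ilt] mono1 by blast
  next
    case new: False
    have st: "(\<exists>a b. free_pair (W!Suc i) a b \<and> W!i = W!Suc i - {a,b}) \<or> (\<exists>v. facet (W!Suc i) v \<and> W!i = W!Suc i - {v})"
      using step[of "Suc i"] Suc.prems(1) by simp
    from st show ?thesis
    proof (elim disjE exE conjE)
      fix v assume v: "facet (W!Suc i) v" "W!i = W!Suc i - {v}"
      then have sv: "s = v" using new Suc.prems by auto
      have "critical W v" unfolding critical_def using v Suc.prems(1) by (intro exI[of _ "Suc i"]) auto
      moreover have "v \<in> K" using v W_sub_K[OF Suc.prems(1)] unfolding facet_def by blast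
      ultimately have "f v = {v}" using ref_crit[OF rf] by blast
      then show ?thesis using sv Suc.prems(2) by simp
    next
      fix a b assume ab: "free_pair (W!Suc i) a b" "W!i = W!Suc i - {a,b}"
      have ur: "upper_regular W b" unfolding upper_regular_def using ab Suc.prems(1)
        by (intro exI[of _ "Suc i"] exI[of _ a]) auto
      have pc: "card b = Suc (card a)" "a \<in> K" "b \<in> K" "a \<subset> b"
        using pair_card[OF Suc.prems(1) ab(1)] by auto
      have fb: "f b = {}" and lb: "lin_ext f (bd K (card b - 1) {b}) = {}"
        using ref_up[OF rf pc(3) ur] by auto
      have "s = a \<or> s = b" using new Suc.prems(2) ab(2) by auto
      then show ?thesis
      proof
        assume "s = b" then show ?thesis using fb by simp
      next
        assume sa: "s = a"
        show ?thesis
        proof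
          fix x assume x: "x \<in> f s"
          show "x \<in> W!Suc i"
          proof (rule ccontr)
            assume nx: "x \<notin> W!Suc i"
            let ?B = "bd K (card b - 1) {b}"
            have B: "?B = {r\<in>K. card r = card a \<and> r \<subset> b}" using pc by (simp add: bd_single)
            have "{r \<in> ?B. x \<in> f r} = {a}"
            proof (rule set_eqI, rule iffI)
              fix r assume r: "r \<in> {r \<in> ?B. x \<in> f r}"
              show "r \<in> {a}"
              proof (rule ccontr)
                assume ra: "r \<notin> {a}"
                have rB: "r \<in> K" "card r = card a" "r \<subset> b" using r B by auto
                have "r \<in> W!Suc i" using closedW[OF Suc.prems(1), of b r] ab(1) rB K_ne
                  unfolding free_pair_def by blast
                moreover have "r \<noteq> b" using rB by blast
                ultimately have "r \<in> W!i" using ra ab(2) by auto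
                then have "f r \<subseteq> W!Suc i" using Suc.IH[OF ilt] mono1 by blast
                then show False using r nx by blast
              qed
            next
              fix r assume "r \<in> {a}"
              then show "r \<in> {r \<in> ?B. x \<in> f r}" using B pc x sa by auto
            qed
            then have "x \<in> lin_ext f ?B" unfolding lin_ext_def by simp
            then show False using lb by simp
          qed
        qed
      qed
    qed
  qed
qed

lemma coref_disj:
  assumes cf: "is_coreference_map K W f" and i: "i < length W"
  shows "\<forall>s\<in>K. s \<notin> W!i \<longrightarrow> f s \<inter> W!i = {}"
proof (rule rev_ind[where P = "\<lambda>i. \<forall>s\<in>K. s \<notin> W!i \<longrightarrow> f s \<inter> W!i = {}", OF _ _ i])
  show "\<forall>s\<in>K. s \<notin> W!(length W - 1) \<longrightarrow> f s \<inter> W!(length W - 1) = {}" using Wlast by simp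
next
  fix i assume i0: "0 < i" and il: "i < length W"
    and IH: "\<forall>s\<in>K. s \<notin> W!i \<longrightarrow> f s \<inter> W!i = {}"
  have mono1: "W!(i-1) \<subseteq> W!i" using step_sub i0 il by blast
  show "\<forall>s\<in>K. s \<notin> W!(i-1) \<longrightarrow> f s \<inter> W!(i-1) = {}"
  proof (intro ballI impI)
    fix s assume s: "s \<in> K" "s \<notin> W!(i-1)"
    show "f s \<inter> W!(i-1) = {}"
    proof (cases "s \<in> W!i")
      case False then show ?thesis using IH s mono1 by blast
    next
      case old: True
      from step[OF i0 il] show ?thesis
      proof (elim disjE exE conjE)
        fix v assume v: "facet (W!i) v" "W!(i-1) = W!i - {v}"
        then have sv: "s = v" using old s by auto
        have "critical W v" unfolding critical_def using v i0 il by (intro exI[of _ i]) auto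
        then have "f v = {v}" using coref_crit[OF cf] s sv by blast
        then show ?thesis using sv s by simp
      next
        fix a b assume ab: "free_pair (W!i) a b" "W!(i-1) = W!i - {a,b}"
        have lr: "lower_regular W a" unfolding lower_regular_def using ab i0 il
          by (intro exI[of _ i] exI[of _ b]) auto
        have pc: "card b = Suc (card a)" "a \<in> K" "b \<in> K" "a \<subset> b"
          using pair_card[OF il ab(1)] by auto
        have fa: "f a = {}" and lc: "lin_ext f (cobd K (card a - 1) {a}) = {}"
          using coref_low[OF cf pc(2) lr] by auto
        have "s = a \<or> s = b" using old s ab(2) by auto
        then show ?thesis
        proof
          assume "s = a" then show ?thesis using fa by simp
        next
          assume sb: "s = b"
          show ?thesis
          proof (rule ccontr)
            assume "f s \<inter> W!(i-1) \<noteq> {}"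
            then obtain x where x: "x \<in> f b" "x \<in> W!(i-1)" using sb by blast
            let ?C = "cobd K (card a - 1) {a}"
            have ca: "card a \<ge> 1" using pc K_ne K_fin by (metis One_nat_def Suc_leI card_gt_0_iff)
            have C: "?C = {r\<in>K. card r = card b \<and> a \<subset> r}" using pc ca by (simp add: cobd_single)
            have "{r \<in> ?C. x \<in> f r} = {b}"
            proof (rule set_eqI, rule iffI)
              fix r assume r: "r \<in> {r \<in> ?C. x \<in> f r}"
              show "r \<in> {b}"
              proof (rule ccontr)
                assume rb: "r \<notin> {b}"
                have rC: "r \<in> K" "card r = card b" "a \<subset> r" using r C by auto
                have "r \<notin> W!i" using ab(1) rC rb unfolding free_pair_def by blast
                then have "f r \<inter> W!i = {}" using IH rC by blast
                then show False using r x mono1 by blast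
              qed
            next
              fix r assume "r \<in> {b}"
              then show "r \<in> {r \<in> ?C. x \<in> f r}" using C pc x by auto
            qed
            then have "x \<in> lin_ext f ?C" unfolding lin_ext_def by simp
            then show False using lc by simp
          qed
        qed
      qed
    qed
  qed
qed

lemma hom_main:
  assumes rf: "is_reference_map K W f"
  shows "i < length W \<Longrightarrow> w \<subseteq> simplices K p \<Longrightarrow> bd K p w = {} \<Longrightarrow> lin_ext f w = {}
    \<Longrightarrow> w \<subseteq> W!i \<Longrightarrow> w \<in> boundaries K p"
proof (induction i arbitrary: w)
  case 0
  then have "w = {}" using W0 by simp
  then show ?case unfolding boundaries_def by (intro CollectI exI[of _ "{}"]) auto
next
  case (Suc i)
  have ilt: "i < length W" using Suc.prems by simp
  have fw: "finite w" using fin_simplices Suc.prems(2) .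
  have st: "(\<exists>a b. free_pair (W!Suc i) a b \<and> W!i = W!Suc i - {a,b}) \<or> (\<exists>v. facet (W!Suc i) v \<and> W!i = W!Suc i - {v})"
    using step[of "Suc i"] Suc.prems(1) by simp
  from st show ?case
  proof (elim disjE exE conjE)
    fix v assume v: "facet (W!Suc i) v" "W!i = W!Suc i - {v}"
    show ?thesis
    proof (cases "v \<in> w")
      case False
      then have "w \<subseteq> W!i" using Suc.prems(5) v(2) by auto
      then show ?thesis using Suc.IH[OF ilt Suc.prems(2,3,4)] by blast
    next
      case True
      have "critical W v" unfolding critical_def using v Suc.prems(1) by (intro exI[of _ "Suc i"]) auto
      moreover have "v \<in> K" using v W_sub_K[OF Suc.prems(1)] unfolding facet_def by blast
      ultimately have fv: "f v = {v}" using ref_crit[OF rf] by blast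
      have "{s \<in> w. v \<in> f s} = {v}"
      proof (rule set_eqI, rule iffI)
        fix s assume s: "s \<in> {s \<in> w. v \<in> f s}"
        show "s \<in> {v}"
        proof (rule ccontr)
          assume "s \<notin> {v}"
          then have "s \<in> W!i" using s Suc.prems(5) v(2) by auto
          then have "f s \<subseteq> W!i" using ref_sub[OF rf ilt] by blast
          then show False using s v(2) by blast
        qed
      next
        fix s assume "s \<in> {v}" then show "s \<in> {s \<in> w. v \<in> f s}" using True fv by simp
      qed
      then have "v \<in> lin_ext f w" unfolding lin_ext_def by simp
      then show ?thesis using Suc.prems(4) by simp
    qed
  next
    fix a b assume ab: "free_pair (W!Suc i) a b" "W!i = W!Suc i - {a,b}"
    have pc: "card b = Suc (card a)" "a \<in> K" "b \<in> K" "a \<subset> b"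
      using pair_card[OF Suc.prems(1) ab(1)] by auto
    consider (B) "b \<in> w" | (A) "b \<notin> w" "a \<in> w" | (N) "b \<notin> w" "a \<notin> w" by blast
    then show ?thesis
    proof cases
      case B
      then have cb: "card b = p + 1" using Suc.prems(2) unfolding simplices_def by auto
      have "{r \<in> w. a \<subset> r} = {b}"
      proof (rule set_eqI, rule iffI)
        fix r assume "r \<in> {r \<in> w. a \<subset> r}"
        then show "r \<in> {b}" using Suc.prems(5) ab(1) unfolding free_pair_def by blast
      next
        fix r assume "r \<in> {b}" then show "r \<in> {r \<in> w. a \<subset> r}" using B pc by simp
      qed
      then have "a \<in> bd K p w" unfolding bd_def using pc cb by simp
      then show ?thesis using Suc.prems(3) by simp
    next
      case A
      then have ca: "card a = p + 1" using Suc.prems(2) unfolding simplices_def by auto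
      then have cb: "card b = p + 2" using pc by simp
      let ?B = "bd K (p+1) {b}"
      have B: "?B = {r\<in>K. card r = p + 1 \<and> r \<subset> b}" by (simp add: bd_single)
      have fB: "finite ?B" using B fin_sub by auto
      define w' where "w' = chain_add w ?B"
      have "w' \<subseteq> W!i"
      proof
        fix x assume "x \<in> w'"
        then have "(x \<in> w \<and> x \<notin> ?B) \<or> (x \<in> ?B \<and> x \<notin> w)" unfolding w'_def chain_add_def by blast
        then show "x \<in> W!i"
        proof
          assume x: "x \<in> w \<and> x \<notin> ?B"
          then have "x \<noteq> a" using B pc ca by auto
          moreover have "x \<noteq> b" using x A by auto
          ultimately show ?thesis using x Suc.prems(5) ab(2) by auto
        next
          assume x: "x \<in> ?B \<and> x \<notin> w"
          then have xB: "x \<in> K" "x \<subset> b" using B by auto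
          have "x \<in> W!Suc i" using closedW[OF Suc.prems(1), of b x] ab(1) xB K_ne
            unfolding free_pair_def by blast
          moreover have "x \<noteq> a" using x A by auto
          moreover have "x \<noteq> b" using xB by auto
          ultimately show ?thesis using ab(2) by auto
        qed
      qed
      moreover have "w' \<subseteq> simplices K p"
        using Suc.prems(2) B unfolding w'_def chain_add_def simplices_def by auto
      moreover have "bd K p w' = {}"
        unfolding w'_def using bd_add[OF fw fB] Suc.prems(3) bdbd[OF pc(3) cb] by simp
      moreover have "lin_ext f w' = {}"
      proof -
        have ur: "upper_regular W b" unfolding upper_regular_def using ab Suc.prems(1)
          by (intro exI[of _ "Suc i"] exI[of _ a]) auto
        then have "lin_ext f (bd K (card b - 1) {b}) = {}"
          using ref_up[OF rf pc(3)] by auto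
        then have "lin_ext f ?B = {}" using cb by simp
        then show ?thesis unfolding w'_def using lin_ext_add[OF fw fB] Suc.prems(4) by simp
      qed
      ultimately have "w' \<in> boundaries K p" using Suc.IH[OF ilt] by blast
      then obtain c where c: "w' = bd K (p+1) c" "c \<subseteq> simplices K (p+1)"
        unfolding boundaries_def by blast
      have fc: "finite c" using fin_simplices c(2) .
      have "w = chain_add w' ?B" unfolding w'_def by (rule chain_add_cancel[symmetric])
      also have "\<dots> = bd K (p+1) (chain_add c {b})" using c(1) bd_add[OF fc, of "{b}"] by simp
      finally have "w = bd K (p+1) (chain_add c {b})" .
      moreover have "chain_add c {b} \<subseteq> simplices K (p+1)"
        using c(2) pc cb unfolding chain_add_def simplices_def by auto
      ultimately show ?thesis unfolding boundaries_def by blast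
    next
      case N
      then have "w \<subseteq> W!i" using Suc.prems(5) ab(2) by auto
      then show ?thesis using Suc.IH[OF ilt Suc.prems(2,3,4)] by blast
    qed
  qed
qed

lemma empty_cobound: "{} \<in> coboundaries K p"
  unfolding coboundaries_def by (cases "p = 0") (auto intro!: exI[of _ "{}"])

lemma cohom_main:
  assumes cf: "is_coreference_map K W f" and i: "i < length W"
  shows "\<forall>w. w \<subseteq> simplices K p \<and> cobd K p w = {} \<and> lin_ext f w = {} \<and> w \<inter> W!i = {}
           \<longrightarrow> w \<in> coboundaries K p"
proof (rule rev_ind[where P = "\<lambda>i. \<forall>w. w \<subseteq> simplices K p \<and> cobd K p w = {} \<and> lin_ext f w = {}
           \<and> w \<inter> W!i = {} \<longrightarrow> w \<in> coboundaries K p", OF _ _ i])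
  show "\<forall>w. w \<subseteq> simplices K p \<and> cobd K p w = {} \<and> lin_ext f w = {} \<and> w \<inter> W!(length W - 1) = {}
           \<longrightarrow> w \<in> coboundaries K p"
  proof (intro allI impI)
    fix w assume "w \<subseteq> simplices K p \<and> cobd K p w = {} \<and> lin_ext f w = {} \<and> w \<inter> W!(length W - 1) = {}"
    then have "w = {}" using Wlast unfolding simplices_def by auto
    then show "w \<in> coboundaries K p" using empty_cobound by simp
  qed
next
  fix i assume i0: "0 < i" and il: "i < length W"
    and IH: "\<forall>w. w \<subseteq> simplices K p \<and> cobd K p w = {} \<and> lin_ext f w = {} \<and> w \<inter> W!i = {}
           \<longrightarrow> w \<in> coboundaries K p"
  show "\<forall>w. w \<subseteq> simplices K p \<and> cobd K p w = {} \<and> lin_ext f w = {} \<and> w \<inter> W!(i-1) = {}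
           \<longrightarrow> w \<in> coboundaries K p"
  proof (intro allI impI)
    fix w assume "w \<subseteq> simplices K p \<and> cobd K p w = {} \<and> lin_ext f w = {} \<and> w \<inter> W!(i-1) = {}"
    then have w: "w \<subseteq> simplices K p" "cobd K p w = {}" "lin_ext f w = {}" "w \<inter> W!(i-1) = {}" by auto
    have fw: "finite w" using fin_simplices w(1) .
    have wK: "w \<subseteq> K" using w(1) unfolding simplices_def by auto
    from step[OF i0 il] show "w \<in> coboundaries K p"
    proof (elim disjE exE conjE)
      fix v assume v: "facet (W!i) v" "W!(i-1) = W!i - {v}"
      show ?thesis
      proof (cases "v \<in> w")
        case False
        have "w \<inter> W!i \<subseteq> (w \<inter> W!(i-1)) \<union> {v}" using v(2) by blast
        then have "w \<inter> W!i = {}" using w(4) False by blast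
        then show ?thesis using IH w by blast
      next
        case True
        have "critical W v" unfolding critical_def using v i0 il by (intro exI[of _ i]) auto
        moreover have "v \<in> K" using True wK by blast
        ultimately have fv: "f v = {v}" using coref_crit[OF cf] by blast
        have "{s \<in> w. v \<in> f s} = {v}"
        proof (rule set_eqI, rule iffI)
          fix s assume s: "s \<in> {s \<in> w. v \<in> f s}"
          show "s \<in> {v}"
          proof (rule ccontr)
            assume "s \<notin> {v}"
            then have "s \<notin> W!i" using s w(4) v(2) by auto
            then have "f s \<inter> W!i = {}" using coref_disj[OF cf il] s wK by blast
            moreover have "v \<in> W!i" using v(1) unfolding facet_def by blast
            ultimately show False using s by blast
          qed
        next
          fix s assume "s \<in> {v}" then show "s \<in> {s \<in> w. v \<in> f s}" using True fv by simp
        qed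
        then have "v \<in> lin_ext f w" unfolding lin_ext_def by simp
        then show ?thesis using w(3) by simp
      qed
    next
      fix a b assume ab: "free_pair (W!i) a b" "W!(i-1) = W!i - {a,b}"
      have pc: "card b = Suc (card a)" "a \<in> K" "b \<in> K" "a \<subset> b"
        using pair_card[OF il ab(1)] by auto
      have ca1: "card a \<ge> 1" using pc K_ne K_fin by (metis One_nat_def Suc_leI card_gt_0_iff)
      consider (A) "a \<in> w" | (B) "a \<notin> w" "b \<in> w" | (N) "a \<notin> w" "b \<notin> w" by blast
      then show ?thesis
      proof cases
        case A
        then have ca: "card a = p + 1" using w(1) unfolding simplices_def by auto
        have "{r \<in> w. r \<subset> b} = {a}"
        proof (rule set_eqI, rule iffI)
          fix r assume r: "r \<in> {r \<in> w. r \<subset> b}"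
          then have "r \<in> K" using wK by auto
          then have "r \<in> W!i" using closedW[OF il, of b r] ab(1) r K_ne unfolding free_pair_def by blast
          moreover have "r \<notin> W!(i-1)" using r w(4) by auto
          ultimately show "r \<in> {a}" using ab(2) r by auto
        next
          fix r assume "r \<in> {a}" then show "r \<in> {r \<in> w. r \<subset> b}" using A pc by auto
        qed
        then have "b \<in> cobd K p w" unfolding cobd_def using pc ca by simp
        then show ?thesis using w(2) by simp
      next
        case B
        then have cb: "card b = p + 1" using w(1) unfolding simplices_def by auto
        then have ca: "card a = p" using pc by simp
        then obtain q where q: "p = Suc q" using ca1 by (cases p) auto
        let ?C = "cobd K q {a}"
        have C: "?C = {r\<in>K. card r = p + 1 \<and> a \<subset> r}" using q by (simp add: cobd_single)
        have fC: "finite ?C" using C fin_sub by auto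
        define w' where "w' = chain_add w ?C"
        have "w' \<inter> W!i = {}"
        proof (rule ccontr)
          assume "w' \<inter> W!i \<noteq> {}"
          then obtain x where x: "x \<in> w'" "x \<in> W!i" by blast
          then have "(x \<in> w \<and> x \<notin> ?C) \<or> (x \<in> ?C \<and> x \<notin> w)" unfolding w'_def chain_add_def by blast
          then show False
          proof
            assume xw: "x \<in> w \<and> x \<notin> ?C"
            then have "x \<notin> W!(i-1)" using w(4) by auto
            then have "x = a \<or> x = b" using x ab(2) by auto
            moreover have "b \<in> ?C" using C pc cb by simp
            ultimately show False using xw B by auto
          next
            assume xC: "x \<in> ?C \<and> x \<notin> w"
            then have "a \<subset> x" using C by auto
            then have "x = b" using ab(1) x unfolding free_pair_def by blast
            then show False using xC B by simp
          qed
        qed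
        moreover have "w' \<subseteq> simplices K p"
          using w(1) C unfolding w'_def chain_add_def simplices_def by auto
        moreover have "cobd K p w' = {}"
          unfolding w'_def using cobd_add[OF fw fC] w(2) cobdcobd[OF pc(2), of q] ca q by simp
        moreover have "lin_ext f w' = {}"
        proof -
          have lr: "lower_regular W a" unfolding lower_regular_def using ab i0 il
            by (intro exI[of _ i] exI[of _ b]) auto
          then have "lin_ext f (cobd K (card a - 1) {a}) = {}"
            using coref_low[OF cf pc(2)] by auto
          then have "lin_ext f ?C = {}" using ca q by simp
          then show ?thesis unfolding w'_def using lin_ext_add[OF fw fC] w(3) by simp
        qed
        ultimately have "w' \<in> coboundaries K p" using IH by blast
        then obtain c where c: "w' = cobd K q c" "c \<subseteq> simplices K q"
          unfolding coboundaries_def using q by auto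
        have fc: "finite c" using fin_simplices c(2) .
        have "w = chain_add w' ?C" unfolding w'_def by (rule chain_add_cancel[symmetric])
        also have "\<dots> = cobd K q (chain_add c {a})" using c(1) cobd_add[OF fc, of "{a}"] by simp
        finally have "w = cobd K q (chain_add c {a})" .
        moreover have "chain_add c {a} \<subseteq> simplices K q"
          using c(2) pc ca q unfolding chain_add_def simplices_def by auto
        ultimately show ?thesis unfolding coboundaries_def using q by auto
      next
        case N
        have "w \<inter> W!i \<subseteq> (w \<inter> W!(i-1)) \<union> {a,b}" using ab(2) by blast
        then have "w \<inter> W!i = {}" using w(4) N by blast
        then show ?thesis using IH w by blast
      qed
    qed
  qed
qed

end

lemma chain_add_self: "chain_add A A = {}" unfolding chain_add_def by auto

theorem theorem8:
  fixes K :: "'a set set" and W :: "'a set set list"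
    and r c :: "'a set \<Rightarrow> 'a set set"
  assumes "simplicial_complex K"
    and "morse_seq K W"
    and "is_reference_map K W r"
    and "is_coreference_map K W c"
  shows "(\<forall>p z z'. z \<in> cycles K p \<and> z' \<in> cycles K p \<and> lin_ext r z = lin_ext r z'
            \<longrightarrow> chain_add z z' \<in> boundaries K p)
       \<and> (\<forall>p z z'. z \<in> cocycles K p \<and> z' \<in> cocycles K p \<and> lin_ext c z = lin_ext c z'
            \<longrightarrow> chain_add z z' \<in> coboundaries K p)"
proof -
  interpret mseq K W using assms(1,2) by unfold_locales
  have 1: "chain_add z z' \<in> boundaries K p"
    if h: "z \<in> cycles K p" "z' \<in> cycles K p" "lin_ext r z = lin_ext r z'" for p z z'
  proof -
    have z: "z \<subseteq> simplices K p" "bd K p z = {}" "z' \<subseteq> simplices K p" "bd K p z' = {}"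
      using h unfolding cycles_def by auto
    have f: "finite z" "finite z'" using z fin_simplices by auto
    have "chain_add z z' \<subseteq> simplices K p" using z unfolding chain_add_def by auto
    moreover have "bd K p (chain_add z z') = {}" using bd_add[OF f] z by simp
    moreover have "lin_ext r (chain_add z z') = {}" using lin_ext_add[OF f] h(3) chain_add_self by simp
    moreover have "chain_add z z' \<subseteq> W!(length W - 1)" using Wlast calculation(1)
      unfolding simplices_def by auto
    moreover have "length W - 1 < length W" using W_ne by simp
    ultimately show ?thesis using hom_main[OF assms(3)] by blast
  qed
  have 2: "chain_add z z' \<in> coboundaries K p"
    if h: "z \<in> cocycles K p" "z' \<in> cocycles K p" "lin_ext c z = lin_ext c z'" for p z z'
  proof -
    have z: "z \<subseteq> simplices K p" "cobd K p z = {}" "z' \<subseteq> simplices K p" "cobd K p z' = {}"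
      using h unfolding cocycles_def by auto
    have f: "finite z" "finite z'" using z fin_simplices by auto
    have "chain_add z z' \<subseteq> simplices K p" using z unfolding chain_add_def by auto
    moreover have "cobd K p (chain_add z z') = {}" using cobd_add[OF f] z by simp
    moreover have "lin_ext c (chain_add z z') = {}" using lin_ext_add[OF f] h(3) chain_add_self by simp
    moreover have "chain_add z z' \<inter> W!0 = {}" using W0 by simp
    moreover have "0 < length W" using W_ne by simp
    ultimately show ?thesis using cohom_main[OF assms(4), of 0 p] by blast
  qed
  show ?thesis using 1 2 by blast
qed

end
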